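(* Suppose $(A,V,B)$ satisfies Schur-Weyl duality and $e\in B$ is an idempotent with $Ve\neq0$. Then the following are equivalent: (1) the triple $(A,Ve,eBe)$ satisfies Schur-Weyl duality; (2) every $eBe$-linear endomorphism of $Ve$ extends to a $B$-linear endomorphism of $V$ (i.e. the restriction map $\Theta_e:\operatorname{End}_B(V)\to\operatorname{End}_{eBe}(Ve)$, $\varphi\mapsto\varphi|_{Ve}$, is surjective).
   Context: $k$ is a field, $A,B$ are $k$-algebras, $V$ an $(A,B)$-bimodule. $(A,V,B)$ satisfies Schur-Weyl duality if the image of $A$ in $\operatorname{End}_k(V)$ (via $a\mapsto(v\mapsto av)$) equals $\operatorname{End}_B(V)$ and the image of $B$ (via $b\mapsto(v\mapsto vb)$) equals $\operatorname{End}_A(V)$. $Ve$ is an $(A,eBe)$-bimodule; any $B$-linear $\varphi$ satisfies $\varphi(Ve)\subseteq Ve$. *)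

theory Defs
  imports Main "HOL.Vector_Spaces" "HOL-Library.FuncSet"
begin

definition k_algebra :: "('k::field \<Rightarrow> 'a::ring_1 \<Rightarrow> 'a) \<Rightarrow> bool" where
  "k_algebra sA \<longleftrightarrow> vector_space sA \<and>
     (\<forall>c x y. sA c (x * y) = sA c x * y \<and> sA c (x * y) = x * sA c y)"

definition kbimodule ::
  "('k::field \<Rightarrow> 'a::ring_1 \<Rightarrow> 'a) \<Rightarrow> ('k \<Rightarrow> 'b::ring_1 \<Rightarrow> 'b) \<Rightarrow>
   ('k \<Rightarrow> 'v::ab_group_add \<Rightarrow> 'v) \<Rightarrow> ('a \<Rightarrow> 'v \<Rightarrow> 'v) \<Rightarrow> ('v \<Rightarrow> 'b \<Rightarrow> 'v) \<Rightarrow> bool" where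
  "kbimodule sA sB sV actA actB \<longleftrightarrow>
     k_algebra sA \<and> k_algebra sB \<and> vector_space sV \<and>
     (\<forall>a a' v. actA (a * a') v = actA a (actA a' v)) \<and>
     (\<forall>v. actA 1 v = v) \<and>
     (\<forall>a a' v. actA (a + a') v = actA a v + actA a' v) \<and>
     (\<forall>a v w. actA a (v + w) = actA a v + actA a w) \<and>
     (\<forall>a c v. actA a (sV c v) = sV c (actA a v)) \<and>
     (\<forall>a c v. actA (sA c a) v = sV c (actA a v)) \<and>
     (\<forall>b b' v. actB v (b * b') = actB (actB v b) b') \<and>
     (\<forall>v. actB v 1 = v) \<and>
     (\<forall>b b' v. actB v (b + b') = actB v b + actB v b') \<and>
     (\<forall>b v w. actB (v + w) b = actB v b + actB w b) \<and>
     (\<forall>b c v. actB (sV c v) b = sV c (actB v b)) \<and>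
     (\<forall>b c v. actB v (sB c b) = sV c (actB v b)) \<and>
     (\<forall>a b v. actB (actA a v) b = actA a (actB v b))"

definition lin_endos :: "('k \<Rightarrow> 'v::ab_group_add \<Rightarrow> 'v) \<Rightarrow> 'v set \<Rightarrow> ('v \<Rightarrow> 'v) set" where
  "lin_endos sV W = {f. f \<in> extensional W \<and> f ` W \<subseteq> W \<and>
      (\<forall>x\<in>W. \<forall>y\<in>W. f (x + y) = f x + f y) \<and> (\<forall>c. \<forall>x\<in>W. f (sV c x) = sV c (f x))}"

definition left_endos :: "('k \<Rightarrow> 'v::ab_group_add \<Rightarrow> 'v) \<Rightarrow> 'v set \<Rightarrow> ('a \<Rightarrow> 'v \<Rightarrow> 'v) \<Rightarrow> 'a set \<Rightarrow> ('v \<Rightarrow> 'v) set" where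
  "left_endos sV W actA Aset = {f \<in> lin_endos sV W. \<forall>a\<in>Aset. \<forall>w\<in>W. f (actA a w) = actA a (f w)}"

definition right_endos :: "('k \<Rightarrow> 'v::ab_group_add \<Rightarrow> 'v) \<Rightarrow> 'v set \<Rightarrow> ('v \<Rightarrow> 'b \<Rightarrow> 'v) \<Rightarrow> 'b set \<Rightarrow> ('v \<Rightarrow> 'v) set" where
  "right_endos sV W actB Bset = {f \<in> lin_endos sV W. \<forall>b\<in>Bset. \<forall>w\<in>W. f (actB w b) = actB (f w) b}"

definition left_image :: "'v set \<Rightarrow> ('a \<Rightarrow> 'v \<Rightarrow> 'v) \<Rightarrow> 'a set \<Rightarrow> ('v \<Rightarrow> 'v) set" where
  "left_image W actA Aset = (\<lambda>a. restrict (actA a) W) ` Aset"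

definition right_image :: "'v set \<Rightarrow> ('v \<Rightarrow> 'b \<Rightarrow> 'v) \<Rightarrow> 'b set \<Rightarrow> ('v \<Rightarrow> 'v) set" where
  "right_image W actB Bset = (\<lambda>b. restrict (\<lambda>w. actB w b) W) ` Bset"

definition schur_weyl ::
  "('k \<Rightarrow> 'v::ab_group_add \<Rightarrow> 'v) \<Rightarrow> 'v set \<Rightarrow> ('a \<Rightarrow> 'v \<Rightarrow> 'v) \<Rightarrow> 'a set \<Rightarrow> ('v \<Rightarrow> 'b \<Rightarrow> 'v) \<Rightarrow> 'b set \<Rightarrow> bool" where
  "schur_weyl sV W actA Aset actB Bset \<longleftrightarrow>
     left_image W actA Aset = right_endos sV W actB Bset \<and>
     right_image W actB Bset = left_endos sV W actA Aset"

end

theory Submission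
  imports Defs
begin

theorem lemma2:
  fixes sA :: "'k::field \<Rightarrow> 'a::ring_1 \<Rightarrow> 'a"
    and sB :: "'k \<Rightarrow> 'b::ring_1 \<Rightarrow> 'b"
    and sV :: "'k \<Rightarrow> 'v::ab_group_add \<Rightarrow> 'v"
    and actA :: "'a \<Rightarrow> 'v \<Rightarrow> 'v"
    and actB :: "'v \<Rightarrow> 'b \<Rightarrow> 'v"
    and e :: 'b
  assumes "kbimodule sA sB sV actA actB"
    and "schur_weyl sV UNIV actA UNIV actB UNIV"
    and "e * e = e"
    and "{actB v e | v. True} \<noteq> {0}"
  shows "schur_weyl sV {actB v e | v. True} actA UNIV actB {e * b * e | b. True}
     \<longleftrightarrow> (\<forall>\<psi> \<in> right_endos sV {actB v e | v. True} actB {e * b * e | b. True}.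
            \<exists>\<phi> \<in> right_endos sV UNIV actB UNIV. restrict \<phi> {actB v e | v. True} = \<psi>)"
proof -
  define W where "W = {actB v e | v. True}"
  define E where "E = {e * b * e | b. True}"
  note K = assms(1)[unfolded kbimodule_def]
  have Amul: "\<And>a a' v. actA (a * a') v = actA a (actA a' v)" using K by auto
  have Aadd: "\<And>a v w. actA a (v + w) = actA a v + actA a w" using K by auto
  have Asc: "\<And>a c v. actA a (sV c v) = sV c (actA a v)" using K by auto
  have Bmul: "\<And>b b' v. actB v (b * b') = actB (actB v b) b'" using K by auto
  have Badd: "\<And>b v w. actB (v + w) b = actB v b + actB w b" using K by auto
  have Bsc: "\<And>b c v. actB (sV c v) b = sV c (actB v b)" using K by auto
  have AB: "\<And>a b v. actB (actA a v) b = actA a (actB v b)" using K by auto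
  have SW1: "left_image UNIV actA UNIV = right_endos sV UNIV actB UNIV"
   and SW2: "right_image UNIV actB UNIV = left_endos sV UNIV actA UNIV"
    using assms(2) unfolding schur_weyl_def by auto
  have ee: "\<And>x. e * (e * x) = e * x" by (simp add: assms(3) mult.assoc[symmetric])
  have rU: "\<And>f. restrict f UNIV = f" by (rule ext) simp
  have We: "\<And>w. w \<in> W \<Longrightarrow> actB w e = w"
    using assms(3) Bmul unfolding W_def by (auto simp: Bmul[symmetric])
  have W_add: "\<And>x y. x \<in> W \<Longrightarrow> y \<in> W \<Longrightarrow> x + y \<in> W"
  proof -
    fix x y assume "x \<in> W" "y \<in> W"
    then obtain u v where "x = actB u e" "y = actB v e" unfolding W_def by blast
    then show "x + y \<in> W" unfolding W_def by (auto simp: Badd[symmetric])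
  qed
  have W_sc: "\<And>c x. x \<in> W \<Longrightarrow> sV c x \<in> W"
  proof -
    fix c x assume "x \<in> W"
    then obtain u where "x = actB u e" unfolding W_def by blast
    then show "sV c x \<in> W" unfolding W_def by (auto simp: Bsc[symmetric])
  qed
  have inW: "\<And>v. actB v e \<in> W" unfolding W_def by blast
  have AW: "\<And>a w. w \<in> W \<Longrightarrow> actA a w \<in> W"
  proof -
    fix a w assume "w \<in> W"
    then obtain v where "w = actB v e" unfolding W_def by blast
    then show "actA a w \<in> W" using AB inW by metis
  qed
  have BW: "\<And>w b. w \<in> W \<Longrightarrow> b \<in> E \<Longrightarrow> actB w b \<in> W"
  proof -
    fix w b assume "w \<in> W" "b \<in> E"
    then obtain v c where "w = actB v e" "b = e * c * e" unfolding W_def E_def by blast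
    then have "actB w b = actB (actB v (e * c)) e" by (simp add: Bmul[symmetric] mult.assoc ee)
    then show "actB w b \<in> W" using inW by simp
  qed
  have a1: "left_image W actA UNIV \<subseteq> right_endos sV W actB E"
  proof
    fix f assume "f \<in> left_image W actA UNIV"
    then obtain a where f: "f = restrict (actA a) W" unfolding left_image_def by blast
    show "f \<in> right_endos sV W actB E"
      unfolding f right_endos_def lin_endos_def
    proof (intro CollectI conjI ballI allI)
      show "restrict (actA a) W \<in> extensional W" by simp
      show "restrict (actA a) W ` W \<subseteq> W" using AW by auto
      fix x y assume "x \<in> W" "y \<in> W"
      then show "restrict (actA a) W (x + y) = restrict (actA a) W x + restrict (actA a) W y"
        using Aadd W_add by simp
    next
      fix c x assume "x \<in> W" then show "restrict (actA a) W (sV c x) = sV c (restrict (actA a) W x)"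
        using Asc W_sc by simp
    next
      fix b w assume "b \<in> E" "w \<in> W"
      then show "restrict (actA a) W (actB w b) = actB (restrict (actA a) W w) b"
        using AB BW AW by simp
    qed
  qed
  have a2: "right_image W actB E \<subseteq> left_endos sV W actA UNIV"
  proof
    fix f assume "f \<in> right_image W actB E"
    then obtain b where b: "b \<in> E" and f: "f = restrict (\<lambda>w. actB w b) W" unfolding right_image_def by blast
    show "f \<in> left_endos sV W actA UNIV"
      unfolding f left_endos_def lin_endos_def
    proof (intro CollectI conjI ballI allI)
      show "restrict (\<lambda>w. actB w b) W \<in> extensional W" by simp
      show "restrict (\<lambda>w. actB w b) W ` W \<subseteq> W" using BW b by auto
      fix x y assume "x \<in> W" "y \<in> W"
      then show "restrict (\<lambda>w. actB w b) W (x + y) = restrict (\<lambda>w. actB w b) W x + restrict (\<lambda>w. actB w b) W y"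
        using Badd W_add by simp
    next
      fix c x assume "x \<in> W" then show "restrict (\<lambda>w. actB w b) W (sV c x) = sV c (restrict (\<lambda>w. actB w b) W x)"
        using Bsc W_sc by simp
    next
      fix a w assume "w \<in> W"
      then show "restrict (\<lambda>w. actB w b) W (actA a w) = actA a (restrict (\<lambda>w. actB w b) W w)"
        using AB BW AW b by simp
    qed
  qed
  have b2: "left_endos sV W actA UNIV \<subseteq> right_image W actB E"
  proof
    fix f assume fL: "f \<in> left_endos sV W actA UNIV"
    define F where "F = (\<lambda>v. f (actB v e))"
    have "F \<in> left_endos sV UNIV actA UNIV"
      unfolding left_endos_def lin_endos_def
    proof (intro CollectI conjI ballI allI)
      show "F \<in> extensional UNIV" by simp
      show "F ` UNIV \<subseteq> UNIV" by simp
      fix x y :: 'v show "F (x + y) = F x + F y"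
        using fL inW Badd unfolding F_def left_endos_def lin_endos_def by simp
    next
      fix c x show "F (sV c x) = sV c (F x)"
        using fL inW Bsc unfolding F_def left_endos_def lin_endos_def by simp
    next
      fix a w show "F (actA a w) = actA a (F w)"
        using fL inW AB unfolding F_def left_endos_def lin_endos_def by simp
    qed
    then have "F \<in> right_image UNIV actB UNIV" using SW2 by simp
    then obtain b where Fb: "F = (\<lambda>w. actB w b)" unfolding right_image_def using rU by auto
    have fW: "\<And>w. w \<in> W \<Longrightarrow> f w \<in> W" and fext: "f \<in> extensional W"
      using fL unfolding left_endos_def lin_endos_def by auto
    have "f = restrict (\<lambda>w. actB w (e * b * e)) W"
    proof
      fix w show "f w = restrict (\<lambda>w. actB w (e * b * e)) W w"
      proof (cases "w \<in> W")
        case True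
        have "f w = f (actB w e)" using We True by simp
        also have "\<dots> = actB w b" using Fb F_def by metis
        finally have 1: "f w = actB w b" .
        have "f w = actB (f w) e" using We fW True by simp
        also have "\<dots> = actB (actB (actB w e) b) e" using 1 We True by simp
        also have "\<dots> = actB w (e * b * e)" by (simp add: Bmul)
        finally show ?thesis using True by simp
      next
        case False then show ?thesis using fext by (simp add: extensional_def)
      qed
    qed
    moreover have "e * b * e \<in> E" unfolding E_def by blast
    ultimately show "f \<in> right_image W actB E" unfolding right_image_def by blast
  qed
  show ?thesis
    unfolding W_def[symmetric] E_def[symmetric]
  proof
    assume sw: "schur_weyl sV W actA UNIV actB E"
    show "\<forall>\<psi> \<in> right_endos sV W actB E. \<exists>\<phi> \<in> right_endos sV UNIV actB UNIV. restrict \<phi> W = \<psi>"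
    proof
      fix \<psi> assume "\<psi> \<in> right_endos sV W actB E"
      then have "\<psi> \<in> left_image W actA UNIV" using sw unfolding schur_weyl_def by simp
      then obtain a where a: "\<psi> = restrict (actA a) W" unfolding left_image_def by blast
      have "actA a \<in> left_image UNIV actA UNIV" unfolding left_image_def by (rule image_eqI[where x=a]) (simp_all add: rU)
      then have "actA a \<in> right_endos sV UNIV actB UNIV" using SW1 by simp
      then show "\<exists>\<phi> \<in> right_endos sV UNIV actB UNIV. restrict \<phi> W = \<psi>" using a by blast
    qed
  next
    assume ext: "\<forall>\<psi> \<in> right_endos sV W actB E. \<exists>\<phi> \<in> right_endos sV UNIV actB UNIV. restrict \<phi> W = \<psi>"
    have "right_endos sV W actB E \<subseteq> left_image W actA UNIV"
    proof
      fix \<psi> assume "\<psi> \<in> right_endos sV W actB E"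
      then obtain \<phi> where p: "\<phi> \<in> right_endos sV UNIV actB UNIV" "restrict \<phi> W = \<psi>" using ext by blast
      then have "\<phi> \<in> left_image UNIV actA UNIV" using SW1 by simp
      then obtain a where "\<phi> = actA a" unfolding left_image_def using rU by auto
      then show "\<psi> \<in> left_image W actA UNIV" using p unfolding left_image_def by blast
    qed
    then show "schur_weyl sV W actA UNIV actB E"
      unfolding schur_weyl_def using a1 a2 b2 by blast
  qed
qed

end
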